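(* Let $A=T_{\sigma_A}$ and $B=T_{\sigma_B}$ be global pseudo-differential operators on $SU_q(2)$ with symbols $\sigma_A,\sigma_B\in\Phi^0(SU_q(2))$. Then $A\circ B$ is a global pseudo-differential operator with symbol $\sigma_{A\circ B}(l)=\sigma_A(l)\sigma_B(l)$ for all $l\in\frac12\mathbb{N}$.
   Context: Fix $0<q<1$. $SU_q(2)$ is the $*$-algebra generated by $a,c$ with $ac^*=qc^*a$, $ca^*=qa^*c$, $c^*a^*=qa^*c^*$, $c^*c=cc^*$, $aa^*+q^2c^*c=a^*a+c^*c=1$, with Haar state $h$, inner product $\langle y,x\rangle=h(xy^* )$, and we also use this name for its completion. For $l\in\frac12\mathbb{N}$, $T^l=[t^l_{ij}]_{-l\le i,j\le l}$ is the irreducible unitary matrix corepresentation of dimension $2l+1$; $\{t^l_{ij}\}$ is an orthogonal basis with $h(t^l_{ij}(t^l_{ij})^* )=[2l+1]_q^{-1}q^{2j}$, where $[x]_q=\frac{q^x-q^{-x}}{q-q^{-1}}$. Fourier transform: $\hat f(l)_{mn}=h(f(t^l_{nm})^* )$. For a $(2l+1)\times(2l+1)$ matrix $M$, $Tr_q(M)=Tr(D_qM)$ with $D_q=\mathrm{diag}(q^{-2i})_{-l\le i\le l}$; Fourier inversion reads $f=\sum_l[2l+1]_qTr_q(\hat f(l)T^l)$. A symbol is a map $\sigma:\frac12\mathbb{N}\to\bigcup_lM_{2l+1}(\mathbb{C})\otimes SU_q(2)$ with $\sigma(l)$ of size $2l+1$; its operator is $T_\sigma f=\mathfrak F^{-1}(\sigma\mathfrak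 Ff)=\sum_l[2l+1]_qTr_q(\sigma(l)\hat f(l)T^l)$. For $l$ write $I_{2l+1}=\{-l,-l+1,\dots,l\}$. A symbol $\sigma$ is homogeneous of Fourier order $m\in\frac12\mathbb{N}$ if for every $l$ there is a map $\psi_\sigma(l):I_{2l+1}\times I_{2l+1}\to I_{2l+1}\times I_{2l+1}$ with $\sigma(l)_{ij}\in\mathrm{Span}\{t^m_{\psi_\sigma(l)(i,j)}\}$, and $\sigma(l)_{ij}=0$ whenever $\psi_\sigma(l)(i,j)\notin I_{2m+1}\times I_{2m+1}$. $\Phi^m(SU_q(2))$ is the set of finite linear combinations of homogeneous symbols of Fourier order $m$. (In particular symbols in $\Phi^0$ have complex scalar entries.) *)

theory Defs
  imports "HOL-Analysis.Analysis"
begin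

text \<open>Conventions.  A spin l in 1/2 N is encoded by n = 2l :: nat.  A row/column index
 i in I_{2l+1} = {-l,...,l} is encoded by the offset a = i + l in {0..n}; thus
 i = a - n/2 and 2i = hint n a.\<close>

definition hint :: "nat \<Rightarrow> nat \<Rightarrow> int" where
  "hint n a = 2 * int a - int n"

definition qnum :: "real \<Rightarrow> real \<Rightarrow> real" where
  "qnum q x = (q powr x - q powr (-x)) / (q - 1 / q)"

text \<open>Algebraic Peter--Weyl data of SU_q(2): a unital complex *-algebra (carrier type 'v,
 ring structure from ring_1, complex scalar multiplication sc, involution star), a linear
 Haar state h, and the matrix coefficients t n a b = t^l_{ij} (n = 2l, a = i+l, b = j+l) of the
 irreducible unitary corepresentations, which form an orthogonal basis with
 h(t^l_{ij} (t^{l'}_{i'j'})^*) = delta [2l+1]_q^{-1} q^{2j}, and T^0 = [1].\<close>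
definition SUq2_data ::
  "real \<Rightarrow> (complex \<Rightarrow> 'v::ring_1 \<Rightarrow> 'v) \<Rightarrow> ('v \<Rightarrow> 'v) \<Rightarrow> ('v \<Rightarrow> complex)
   \<Rightarrow> (nat \<Rightarrow> nat \<Rightarrow> nat \<Rightarrow> 'v) \<Rightarrow> bool" where
  "SUq2_data q sc star h t \<longleftrightarrow>
     0 < q \<and> q < 1 \<and>
     vector_space sc \<and>
     (\<forall>c x y. sc c (x * y) = sc c x * y \<and> sc c (x * y) = x * sc c y) \<and>
     (\<forall>x y. h (x + y) = h x + h y) \<and> (\<forall>c x. h (sc c x) = c * h x) \<and>
     (\<forall>c x. star (sc c x) = sc (cnj c) (star x)) \<and>
     (\<forall>x y. star (x + y) = star x + star y) \<and>
     (\<forall>x y. star (x * y) = star y * star x) \<and> (\<forall>x. star (star x) = x) \<and>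
     t 0 0 0 = 1 \<and>
     (\<forall>n a b n' a' b'. a \<le> n \<longrightarrow> b \<le> n \<longrightarrow> a' \<le> n' \<longrightarrow> b' \<le> n' \<longrightarrow>
        h (t n a b * star (t n' a' b')) =
          (if n = n' \<and> a = a' \<and> b = b'
           then complex_of_real (q powr (of_int (hint n b)) / qnum q (real n + 1))
           else 0)) \<and>
     (\<forall>f. f \<in> module.span sc {t n a b | n a b. a \<le> n \<and> b \<le> n})"

text \<open>Symbols: sigma n a b is the (a,b) entry (a,b \<le> n) of sigma(l), l = n/2.\<close>
type_synonym 'v symbol = "nat \<Rightarrow> nat \<Rightarrow> nat \<Rightarrow> 'v"

definition fhat :: "('v::ring_1 \<Rightarrow> 'v) \<Rightarrow> ('v \<Rightarrow> complex) \<Rightarrow> (nat \<Rightarrow> nat \<Rightarrow> nat \<Rightarrow> 'v)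
     \<Rightarrow> 'v \<Rightarrow> nat \<Rightarrow> nat \<Rightarrow> nat \<Rightarrow> complex" where
  "fhat star h t f n a b = h (f * star (t n b a))"

definition fsupp :: "('v::ring_1 \<Rightarrow> 'v) \<Rightarrow> ('v \<Rightarrow> complex) \<Rightarrow> (nat \<Rightarrow> nat \<Rightarrow> nat \<Rightarrow> 'v)
     \<Rightarrow> 'v \<Rightarrow> nat set" where
  "fsupp star h t f = {n. \<exists>a\<le>n. \<exists>b\<le>n. fhat star h t f n a b \<noteq> 0}"

text \<open>T_sigma f = sum_l [2l+1]_q Tr_q(sigma(l) fhat(l) T^l), Tr_q(M) = sum_i q^{-2i} M_ii.
 Only l with fhat(l) \<noteq> 0 contribute (finitely many, for f in SU_q(2)).\<close>
definition Top :: "real \<Rightarrow> (complex \<Rightarrow> 'v::ring_1 \<Rightarrow> 'v) \<Rightarrow> ('v \<Rightarrow> 'v) \<Rightarrow> ('v \<Rightarrow> complex)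
     \<Rightarrow> (nat \<Rightarrow> nat \<Rightarrow> nat \<Rightarrow> 'v) \<Rightarrow> 'v symbol \<Rightarrow> 'v \<Rightarrow> 'v" where
  "Top q sc star h t \<sigma> f =
     (\<Sum>n\<in>fsupp star h t f. sc (complex_of_real (qnum q (real n + 1)))
        (\<Sum>a\<le>n. \<Sum>j\<le>n. \<Sum>k\<le>n.
           sc (complex_of_real (q powr (- of_int (hint n a))) * fhat star h t f n j k)
              (\<sigma> n a j * t n k a)))"

definition sym_mult :: "'v::ring_1 symbol \<Rightarrow> 'v symbol \<Rightarrow> 'v symbol" where
  "sym_mult \<sigma> \<tau> n a b = (\<Sum>j\<le>n. \<sigma> n a j * \<tau> n j b)"

text \<open>Homogeneous symbol of Fourier order m (encoded M = 2m).\<close>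
definition homogeneous :: "(complex \<Rightarrow> 'v::ring_1 \<Rightarrow> 'v) \<Rightarrow> (nat \<Rightarrow> nat \<Rightarrow> nat \<Rightarrow> 'v)
     \<Rightarrow> nat \<Rightarrow> 'v symbol \<Rightarrow> bool" where
  "homogeneous sc t M \<sigma> \<longleftrightarrow>
    (\<forall>n. \<exists>\<psi> :: nat \<Rightarrow> nat \<Rightarrow> nat \<times> nat. \<forall>a\<le>n. \<forall>b\<le>n.
       fst (\<psi> a b) \<le> n \<and> snd (\<psi> a b) \<le> n \<and>
       (\<forall>a' b'. a' \<le> M \<longrightarrow> b' \<le> M \<longrightarrow> hint M a' = hint n (fst (\<psi> a b)) \<longrightarrow>
           hint M b' = hint n (snd (\<psi> a b)) \<longrightarrow> \<sigma> n a b \<in> module.span sc {t M a' b'}) \<and>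
       (\<not> (\<exists>a'\<le>M. \<exists>b'\<le>M. hint M a' = hint n (fst (\<psi> a b)) \<and> hint M b' = hint n (snd (\<psi> a b)))
           \<longrightarrow> \<sigma> n a b = 0))"

definition Phi :: "(complex \<Rightarrow> 'v::ring_1 \<Rightarrow> 'v) \<Rightarrow> (nat \<Rightarrow> nat \<Rightarrow> nat \<Rightarrow> 'v)
     \<Rightarrow> nat \<Rightarrow> 'v symbol set" where
  "Phi sc t M = {\<sigma>. \<exists>K (c :: nat \<Rightarrow> complex) s. (\<forall>k<K. homogeneous sc t M (s k)) \<and>
      (\<forall>n a b. a \<le> n \<longrightarrow> b \<le> n \<longrightarrow> \<sigma> n a b = (\<Sum>k<K. sc (c k) (s k n a b)))}"

end

theory Submission
  imports Defs
begin

locale suq = vector_space sc for sc :: "complex \<Rightarrow> 'v::ring_1 \<Rightarrow> 'v" +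
  fixes q :: real and star :: "'v \<Rightarrow> 'v" and h :: "'v \<Rightarrow> complex" and t :: "nat \<Rightarrow> nat \<Rightarrow> nat \<Rightarrow> 'v"
  assumes q0: "0 < q" and q1: "q < 1"
  and scm: "\<And>c x y. sc c (x * y) = sc c x * y"
  and hadd: "\<And>x y. h (x + y) = h x + h y"
  and hsc: "\<And>c x. h (sc c x) = c * h x"
  and t000: "t 0 0 0 = 1"
  and orth: "\<And>n a b n' a' b'. a \<le> n \<Longrightarrow> b \<le> n \<Longrightarrow> a' \<le> n' \<Longrightarrow> b' \<le> n' \<Longrightarrow>
        h (t n a b * star (t n' a' b')) =
          (if n = n' \<and> a = a' \<and> b = b'
           then complex_of_real (q powr (of_int (hint n b)) / qnum q (real n + 1))
           else 0)"
  and spanall: "\<And>f. f \<in> span {t n a b | n a b. a \<le> n \<and> b \<le> n}"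
begin

lemma qnum_pos: "qnum q (real n + 1) > 0"
proof -
  have x: "real n + 1 > 0" by simp
  have "q powr (real n + 1) < 1 powr (real n + 1)" using q0 q1 x by (intro powr_less_mono2) auto
  hence "q powr (real n + 1) < 1" by simp
  moreover have "1 powr (- (real n + 1)) < q powr (- (real n + 1))" using q0 q1 x by (intro powr_less_mono2_neg) auto
  hence "q powr (- (real n + 1)) > 1" by simp
  moreover have "q - 1/q < 0"
  proof -
    have "q*q < 1*1" using q0 q1 by (intro mult_strict_mono) auto
    thus ?thesis using q0 by (simp add: field_simps)
  qed
  ultimately show ?thesis unfolding qnum_def by (simp add: divide_neg_neg)
qed

lemma h0: "h 0 = 0"
  using hadd[of 0 0] by simp

lemma h_sum: "h (sum f A) = (\<Sum>x\<in>A. h (f x))"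
  by (induct A rule: infinite_finite_induct) (simp_all add: h0 hadd)

lemma sc1: "sc c 1 * y = sc c y"
  using scm[of c 1 y] by simp

definition P :: "nat set \<Rightarrow> (nat \<Rightarrow> nat \<Rightarrow> nat \<Rightarrow> complex) \<Rightarrow> 'v" where
  "P S C = (\<Sum>n\<in>S. \<Sum>k\<le>n. \<Sum>a\<le>n. sc (C n k a) (t n k a))"

lemma fhat_P:
  assumes "finite S" "x \<le> n" "y \<le> n"
  shows "h (P S C * star (t n y x)) =
     (if n \<in> S then C n y x * complex_of_real (q powr (of_int (hint n x)) / qnum q (real n + 1)) else 0)"
proof -
  have "h (P S C * star (t n y x)) = (\<Sum>n'\<in>S. \<Sum>k\<le>n'. \<Sum>a\<le>n'. C n' k a * h (t n' k a * star (t n y x)))"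
    unfolding P_def by (simp add: sum_distrib_right h_sum scm[symmetric] hsc)
  also have "\<dots> = (\<Sum>n'\<in>S. if n' = n then C n y x * complex_of_real (q powr (of_int (hint n x)) / qnum q (real n + 1)) else 0)"
  proof (rule sum.cong[OF refl])
    fix n' assume "n' \<in> S"
    show "(\<Sum>k\<le>n'. \<Sum>a\<le>n'. C n' k a * h (t n' k a * star (t n y x))) = (if n' = n then C n y x * complex_of_real (q powr (of_int (hint n x)) / qnum q (real n + 1)) else 0)"
    proof (cases "n' = n")
      case True
      have "(\<Sum>k\<le>n'. \<Sum>a\<le>n'. C n' k a * h (t n' k a * star (t n y x))) =
        (\<Sum>k\<le>n. \<Sum>a\<le>n. if a = x then (if k = y then C n y x * complex_of_real (q powr (of_int (hint n x)) / qnum q (real n + 1)) else 0) else 0)"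
        using True assms by (intro sum.cong refl) (auto simp: orth)
      also have "\<dots> = C n y x * complex_of_real (q powr (of_int (hint n x)) / qnum q (real n + 1))"
        using assms by (simp add: sum.delta)
      finally show ?thesis using True by simp
    next
      case False
      then show ?thesis using assms by (simp add: orth)
    qed
  qed
  also have "\<dots> = (if n \<in> S then C n y x * complex_of_real (q powr (of_int (hint n x)) / qnum q (real n + 1)) else 0)"
    using assms(1) by (simp add: sum.delta)
  finally show ?thesis .
qed

lemma fsupp_finite: "finite (fsupp star h t f)"
proof -
  let ?Q = "{f. \<exists>N. finite N \<and> (\<forall>n a b. a \<le> n \<longrightarrow> b \<le> n \<longrightarrow> n \<notin> N \<longrightarrow> h (f * star (t n b a)) = 0)}"
  have sub: "subspace ?Q"
  proof (rule subspaceI)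
    show "0 \<in> ?Q" by (auto simp: h0)
  next
    fix x y assume "x \<in> ?Q" "y \<in> ?Q"
    then obtain N1 N2 where "finite N1" "finite N2"
      "\<forall>n a b. a \<le> n \<longrightarrow> b \<le> n \<longrightarrow> n \<notin> N1 \<longrightarrow> h (x * star (t n b a)) = 0"
      "\<forall>n a b. a \<le> n \<longrightarrow> b \<le> n \<longrightarrow> n \<notin> N2 \<longrightarrow> h (y * star (t n b a)) = 0" by auto
    then show "x + y \<in> ?Q"
      by (intro CollectI exI[of _ "N1 \<union> N2"]) (auto simp: distrib_right hadd)
  next
    fix c x assume "x \<in> ?Q"
    then show "sc c x \<in> ?Q" by (auto simp: scm[symmetric] hsc)
  qed
  have "(\<lambda>f. f \<in> ?Q) f"
  proof (rule span_induct[OF spanall])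
    show "subspace (Collect (\<lambda>f. f \<in> ?Q))" using sub by simp
  next
    fix x assume "x \<in> {t n a b | n a b. a \<le> n \<and> b \<le> n}"
    then obtain n0 a0 b0 where x: "x = t n0 a0 b0" "a0 \<le> n0" "b0 \<le> n0" by auto
    show "x \<in> ?Q"
      by (intro CollectI exI[of _ "{n0}"]) (auto simp: x orth)
  qed
  then obtain N where N: "finite N" "\<forall>n a b. a \<le> n \<longrightarrow> b \<le> n \<longrightarrow> n \<notin> N \<longrightarrow> h (f * star (t n b a)) = 0" by auto
  have "fsupp star h t f \<subseteq> N" using N(2) unfolding fsupp_def fhat_def by auto
  thus ?thesis using N(1) finite_subset by blast
qed

lemma phi0_scalar:
  assumes "\<sigma> \<in> Phi sc t 0"
  shows "\<exists>\<alpha>. \<forall>n a b. a \<le> n \<longrightarrow> b \<le> n \<longrightarrow> \<sigma> n a b = sc (\<alpha> n a b) 1"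
proof -
  obtain K :: nat and c :: "nat \<Rightarrow> complex" and s :: "nat \<Rightarrow> 'v symbol" where hs: "\<forall>k<K. homogeneous sc t 0 (s k)"
    and eq: "\<forall>n a b. a \<le> n \<longrightarrow> b \<le> n \<longrightarrow> \<sigma> n a b = (\<Sum>k<K. sc (c k) (s k n a b))"
    using assms unfolding Phi_def mem_Collect_eq by blast
  have one: "\<exists>d. s k n a b = sc d 1" if "k < K" "a \<le> n" "b \<le> n" for k n a b
  proof -
    have hom: "homogeneous sc t 0 (s k)" using hs that(1) by blast
    obtain \<psi> where p: "\<forall>a\<le>n. \<forall>b\<le>n.
       fst (\<psi> a b) \<le> n \<and> snd (\<psi> a b) \<le> n \<and>
       (\<forall>a' b'. a' \<le> 0 \<longrightarrow> b' \<le> 0 \<longrightarrow> hint 0 a' = hint n (fst (\<psi> a b)) \<longrightarrow>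
           hint 0 b' = hint n (snd (\<psi> a b)) \<longrightarrow> s k n a b \<in> span {t 0 a' b'}) \<and>
       (\<not> (\<exists>a'\<le>0. \<exists>b'\<le>0. hint 0 a' = hint n (fst (\<psi> a b)) \<and> hint 0 b' = hint n (snd (\<psi> a b)))
           \<longrightarrow> s k n a b = 0)"
      using hom[unfolded homogeneous_def, THEN spec[of _ n]] ..
    have pa: "(\<forall>a' b'. a' \<le> 0 \<longrightarrow> b' \<le> 0 \<longrightarrow> hint 0 a' = hint n (fst (\<psi> a b)) \<longrightarrow>
           hint 0 b' = hint n (snd (\<psi> a b)) \<longrightarrow> s k n a b \<in> span {t 0 a' b'})"
      "(\<not> (\<exists>a'\<le>0. \<exists>b'\<le>0. hint 0 a' = hint n (fst (\<psi> a b)) \<and> hint 0 b' = hint n (snd (\<psi> a b)))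
           \<longrightarrow> s k n a b = 0)"
      using p[rule_format, OF that(2) that(3)] by simp_all
    show ?thesis
    proof (cases "hint 0 0 = hint n (fst (\<psi> a b)) \<and> hint 0 0 = hint n (snd (\<psi> a b))")
      case True
      then have "s k n a b \<in> span {t 0 0 0}" using pa(1)[rule_format, of 0 0] by simp
      then show ?thesis by (auto simp: span_singleton t000)
    next
      case False
      then have "\<not> (\<exists>a'\<le>0. \<exists>b'\<le>0. hint 0 a' = hint n (fst (\<psi> a b)) \<and> hint 0 b' = hint n (snd (\<psi> a b)))"
        by auto
      then have "s k n a b = 0" using pa(2) by blast
      then show ?thesis by (intro exI[of _ 0]) simp
    qed
  qed
  define d where "d k n a b = (SOME d. s k n a b = sc d 1)" for k n a b
  have dd: "s k n a b = sc (d k n a b) 1" if "k < K" "a \<le> n" "b \<le> n" for k n a b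
    unfolding d_def using someI_ex[OF one[OF that]] .
  show ?thesis
    by (intro exI[of _ "\<lambda>n a b. \<Sum>k<K. c k * d k n a b"]) (auto simp: eq dd scale_sum_left)
qed


definition coef :: "(nat \<Rightarrow> nat \<Rightarrow> nat \<Rightarrow> complex) \<Rightarrow> (nat \<Rightarrow> nat \<Rightarrow> nat \<Rightarrow> complex) \<Rightarrow> nat \<Rightarrow> nat \<Rightarrow> nat \<Rightarrow> complex" where
  "coef \<alpha> F n k a = complex_of_real (qnum q (real n + 1)) *
     (\<Sum>j\<le>n. complex_of_real (q powr (- of_int (hint n a))) * F n j k * \<alpha> n a j)"

lemma Top_scalar:
  assumes "\<forall>n a b. a \<le> n \<longrightarrow> b \<le> n \<longrightarrow> \<sigma> n a b = sc (\<alpha> n a b) 1"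
  shows "Top q sc star h t \<sigma> f = P (fsupp star h t f) (coef \<alpha> (fhat star h t f))"
  unfolding Top_def P_def
proof (rule sum.cong[OF refl])
  fix n assume "n \<in> fsupp star h t f"
  let ?F = "fhat star h t f"
  have "(\<Sum>a\<le>n. \<Sum>j\<le>n. \<Sum>k\<le>n.
           sc (complex_of_real (q powr (- of_int (hint n a))) * ?F n j k) (\<sigma> n a j * t n k a))
      = (\<Sum>a\<le>n. \<Sum>j\<le>n. \<Sum>k\<le>n.
           sc (complex_of_real (q powr (- of_int (hint n a))) * ?F n j k * \<alpha> n a j) (t n k a))"
    using assms by (intro sum.cong refl) (auto simp: sc1)
  also have "\<dots> = (\<Sum>a\<le>n. \<Sum>k\<le>n. \<Sum>j\<le>n.
           sc (complex_of_real (q powr (- of_int (hint n a))) * ?F n j k * \<alpha> n a j) (t n k a))"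
    by (intro sum.cong refl sum.swap)
  also have "\<dots> = (\<Sum>k\<le>n. \<Sum>a\<le>n. \<Sum>j\<le>n.
           sc (complex_of_real (q powr (- of_int (hint n a))) * ?F n j k * \<alpha> n a j) (t n k a))"
    by (rule sum.swap)
  finally show "sc (complex_of_real (qnum q (real n + 1))) (\<Sum>a\<le>n. \<Sum>j\<le>n. \<Sum>k\<le>n.
           sc (complex_of_real (q powr (- of_int (hint n a))) * ?F n j k) (\<sigma> n a j * t n k a))
     = (\<Sum>k\<le>n. \<Sum>a\<le>n. sc (coef \<alpha> ?F n k a) (t n k a))"
    by (simp add: scale_sum_right scale_sum_left coef_def sum_distrib_left)
qed

lemma fhat_Top:
  assumes "\<forall>n a b. a \<le> n \<longrightarrow> b \<le> n \<longrightarrow> \<sigma> n a b = sc (\<alpha> n a b) 1"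
    and "x \<le> n" "y \<le> n"
  shows "fhat star h t (Top q sc star h t \<sigma> f) n x y = (\<Sum>j\<le>n. fhat star h t f n j y * \<alpha> n x j)"
proof -
  let ?F = "fhat star h t f"
  have "fhat star h t (Top q sc star h t \<sigma> f) n x y
      = (if n \<in> fsupp star h t f then coef \<alpha> ?F n y x * complex_of_real (q powr (of_int (hint n x)) / qnum q (real n + 1)) else 0)"
    unfolding fhat_def Top_scalar[OF assms(1)] using fhat_P[OF fsupp_finite assms(2,3)] .
  also have "\<dots> = (\<Sum>j\<le>n. ?F n j y * \<alpha> n x j)"
  proof (cases "n \<in> fsupp star h t f")
    case True
    have r: "qnum q (real n + 1) * q powr (- of_int (hint n x)) * (q powr (of_int (hint n x)) / qnum q (real n + 1)) = 1"
      using qnum_pos[of n] q0 by (simp add: powr_minus field_simps)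
    have "coef \<alpha> ?F n y x * complex_of_real (q powr (of_int (hint n x)) / qnum q (real n + 1))
       = (\<Sum>j\<le>n. complex_of_real (qnum q (real n + 1) * q powr (- of_int (hint n x)) * (q powr (of_int (hint n x)) / qnum q (real n + 1))) * (?F n j y * \<alpha> n x j))"
      unfolding coef_def by (simp add: sum_distrib_left sum_distrib_right mult_ac)
    also have "\<dots> = (\<Sum>j\<le>n. ?F n j y * \<alpha> n x j)" unfolding r by simp
    finally show ?thesis using True by simp
  next
    case False
    then have "\<forall>j\<le>n. ?F n j y = 0" using assms(3) unfolding fsupp_def by auto
    then show ?thesis using False by simp
  qed
  finally show ?thesis .
qed

lemma fsupp_Top:
  assumes "\<forall>n a b. a \<le> n \<longrightarrow> b \<le> n \<longrightarrow> \<sigma> n a b = sc (\<alpha> n a b) 1"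
  shows "fsupp star h t (Top q sc star h t \<sigma> f) \<subseteq> fsupp star h t f"
proof
  fix n assume "n \<in> fsupp star h t (Top q sc star h t \<sigma> f)"
  then obtain x y where xy: "x \<le> n" "y \<le> n" "fhat star h t (Top q sc star h t \<sigma> f) n x y \<noteq> 0"
    unfolding fsupp_def by auto
  then have "(\<Sum>j\<le>n. fhat star h t f n j y * \<alpha> n x j) \<noteq> 0" using fhat_Top[OF assms xy(1,2)] by simp
  then obtain j where "j \<le> n" "fhat star h t f n j y \<noteq> 0"
    by (metis (no_types, lifting) atMost_iff mult_eq_0_iff sum.neutral)
  then show "n \<in> fsupp star h t f" using xy(2) unfolding fsupp_def by auto
qed

lemma Top_super:
  assumes "\<forall>n a b. a \<le> n \<longrightarrow> b \<le> n \<longrightarrow> \<sigma> n a b = sc (\<alpha> n a b) 1"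
    and "fsupp star h t g \<subseteq> S" "finite S"
  shows "Top q sc star h t \<sigma> g = P S (coef \<alpha> (fhat star h t g))"
  unfolding Top_scalar[OF assms(1)] P_def
proof (rule sum.mono_neutral_left[OF assms(3) assms(2)])
  show "\<forall>n\<in>S - fsupp star h t g. (\<Sum>k\<le>n. \<Sum>a\<le>n. sc (coef \<alpha> (fhat star h t g) n k a) (t n k a)) = 0"
  proof
    fix n assume "n \<in> S - fsupp star h t g"
    then have z: "\<forall>j\<le>n. \<forall>k\<le>n. fhat star h t g n j k = 0" unfolding fsupp_def by auto
    have "\<forall>k\<le>n. \<forall>a\<le>n. coef \<alpha> (fhat star h t g) n k a = 0"
      using z unfolding coef_def by simp
    then show "(\<Sum>k\<le>n. \<Sum>a\<le>n. sc (coef \<alpha> (fhat star h t g) n k a) (t n k a)) = 0" by simp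
  qed
qed

lemma main:
  assumes "\<sigma>A \<in> Phi sc t 0" and "\<sigma>B \<in> Phi sc t 0"
  shows "Top q sc star h t \<sigma>A \<circ> Top q sc star h t \<sigma>B = Top q sc star h t (sym_mult \<sigma>A \<sigma>B)"
proof
  fix f
  obtain \<alpha> where A: "\<forall>n a b. a \<le> n \<longrightarrow> b \<le> n \<longrightarrow> \<sigma>A n a b = sc (\<alpha> n a b) 1"
    using phi0_scalar[OF assms(1)] by blast
  obtain \<beta> where B: "\<forall>n a b. a \<le> n \<longrightarrow> b \<le> n \<longrightarrow> \<sigma>B n a b = sc (\<beta> n a b) 1"
    using phi0_scalar[OF assms(2)] by blast
  define \<gamma> where "\<gamma> (n::nat) a b = (\<Sum>j\<le>n. \<alpha> n a j * \<beta> n j b)" for n a b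
  have C: "\<forall>(n::nat) (a::nat) (b::nat). a \<le> n \<longrightarrow> b \<le> n \<longrightarrow> sym_mult \<sigma>A \<sigma>B n a b = sc (\<gamma> n a b) 1"
  proof (intro allI impI)
    fix n a b :: nat assume "a \<le> n" "b \<le> n"
    then have "sym_mult \<sigma>A \<sigma>B n a b = (\<Sum>j\<le>n. sc (\<alpha> n a j * \<beta> n j b) 1)"
      unfolding sym_mult_def using A B by (intro sum.cong refl) (auto simp: sc1)
    then show "sym_mult \<sigma>A \<sigma>B n a b = sc (\<gamma> n a b) 1" by (simp add: \<gamma>_def scale_sum_left)
  qed
  let ?g = "Top q sc star h t \<sigma>B f"
  let ?S = "fsupp star h t f"
  have "Top q sc star h t \<sigma>A ?g = P ?S (coef \<alpha> (fhat star h t ?g))"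
    by (rule Top_super[OF A fsupp_Top[OF B] fsupp_finite])
  also have "\<dots> = P ?S (coef \<gamma> (fhat star h t f))"
    unfolding P_def
  proof (intro sum.cong refl)
    fix n k a :: nat assume "k \<in> {..n}" "a \<in> {..n}"
    then have ka: "k \<le> n" "a \<le> n" by auto
    have G: "\<And>j. j \<in> {..n} \<Longrightarrow> fhat star h t ?g n j k = (\<Sum>i\<le>n. fhat star h t f n i k * \<beta> n j i)"
      using fhat_Top[OF B _ ka(1)] by auto
    have "coef \<alpha> (fhat star h t ?g) n k a = complex_of_real (qnum q (real n + 1)) *
       (\<Sum>j\<le>n. complex_of_real (q powr (- of_int (hint n a))) * (\<Sum>i\<le>n. fhat star h t f n i k * \<beta> n j i) * \<alpha> n a j)"
      unfolding coef_def using G by simp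
    also have "\<dots> = complex_of_real (qnum q (real n + 1)) *
       (\<Sum>j\<le>n. \<Sum>i\<le>n. complex_of_real (q powr (- of_int (hint n a))) * fhat star h t f n i k * (\<alpha> n a j * \<beta> n j i))"
      by (simp add: sum_distrib_left sum_distrib_right mult_ac)
    also have "\<dots> = complex_of_real (qnum q (real n + 1)) *
       (\<Sum>i\<le>n. \<Sum>j\<le>n. complex_of_real (q powr (- of_int (hint n a))) * fhat star h t f n i k * (\<alpha> n a j * \<beta> n j i))"
      by (rule arg_cong[where f="\<lambda>x. complex_of_real (qnum q (real n + 1)) * x"], rule sum.swap)
    also have "\<dots> = coef \<gamma> (fhat star h t f) n k a"
      unfolding coef_def \<gamma>_def by (simp add: sum_distrib_left)
    finally show "sc (coef \<alpha> (fhat star h t ?g) n k a) (t n k a) = sc (coef \<gamma> (fhat star h t f) n k a) (t n k a)"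
      by simp
  qed
  also have "\<dots> = Top q sc star h t (sym_mult \<sigma>A \<sigma>B) f"
    by (rule Top_scalar[OF C, symmetric])
  finally show "(Top q sc star h t \<sigma>A \<circ> Top q sc star h t \<sigma>B) f = Top q sc star h t (sym_mult \<sigma>A \<sigma>B) f"
    by simp
qed

end

theorem mainTheorem4:
  fixes q :: real and sc :: "complex \<Rightarrow> 'v::ring_1 \<Rightarrow> 'v" and star :: "'v \<Rightarrow> 'v"
    and h :: "'v \<Rightarrow> complex" and t :: "nat \<Rightarrow> nat \<Rightarrow> nat \<Rightarrow> 'v"
    and \<sigma>A \<sigma>B :: "'v symbol"
  assumes "SUq2_data q sc star h t"
    and "\<sigma>A \<in> Phi sc t 0" and "\<sigma>B \<in> Phi sc t 0"
  shows "Top q sc star h t \<sigma>A \<circ> Top q sc star h t \<sigma>B = Top q sc star h t (sym_mult \<sigma>A \<sigma>B)"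
proof -
  note S = assms(1)[unfolded SUq2_data_def]
  have D1: "0 < q" using S[THEN conjunct1] .
  have D2: "q < 1" using S[THEN conjunct2, THEN conjunct1] .
  have D3: "vector_space sc" using S[THEN conjunct2, THEN conjunct2, THEN conjunct1] .
  have D4: "\<And>c x y. sc c (x * y) = sc c x * y" using S[THEN conjunct2, THEN conjunct2, THEN conjunct2, THEN conjunct1] by blast
  have D5: "\<And>x y. h (x + y) = h x + h y" using S[THEN conjunct2, THEN conjunct2, THEN conjunct2, THEN conjunct2, THEN conjunct1] by blast
  have D6: "\<And>c x. h (sc c x) = c * h x" using S[THEN conjunct2, THEN conjunct2, THEN conjunct2, THEN conjunct2, THEN conjunct2, THEN conjunct1] by blast
  have D7: "t 0 0 0 = 1" using S[THEN conjunct2, THEN conjunct2, THEN conjunct2, THEN conjunct2, THEN conjunct2, THEN conjunct2, THEN conjunct2, THEN conjunct2, THEN conjunct2, THEN conjunct2, THEN conjunct1] .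
  have D8: "\<And>n a b n' a' b'. a \<le> n \<Longrightarrow> b \<le> n \<Longrightarrow> a' \<le> n' \<Longrightarrow> b' \<le> n' \<Longrightarrow>
        h (t n a b * star (t n' a' b')) =
          (if n = n' \<and> a = a' \<and> b = b'
           then complex_of_real (q powr (of_int (hint n b)) / qnum q (real n + 1))
           else 0)" using S[THEN conjunct2, THEN conjunct2, THEN conjunct2, THEN conjunct2, THEN conjunct2, THEN conjunct2, THEN conjunct2, THEN conjunct2, THEN conjunct2, THEN conjunct2, THEN conjunct2, THEN conjunct1] by blast
  have D9: "\<And>f. f \<in> module.span sc {t n a b | n a b. a \<le> n \<and> b \<le> n}" using S[THEN conjunct2, THEN conjunct2, THEN conjunct2, THEN conjunct2, THEN conjunct2, THEN conjunct2, THEN conjunct2, THEN conjunct2, THEN conjunct2, THEN conjunct2, THEN conjunct2, THEN conjunct2] by blast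
  interpret vector_space sc by (rule D3)
  interpret suq sc q star h t
    by (unfold_locales; (rule D1 D2 D4 D5 D6 D7 D8 D9)?; assumption?)
  show ?thesis by (rule main[OF assms(2,3)])
qed

end
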